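(* Let $n\ge1$ and let $S\in GL(4n,\mathbb{R})$ be written in $2n\times2n$ blocks as $S=\begin{pmatrix}A&B\\C&D\end{pmatrix}$. Suppose that for every real symmetric $\varGamma\in\mathbb{R}^{2n\times2n}$ the matrix $S\begin{pmatrix}\varGamma&0\\0&\varGamma\end{pmatrix}S^{T}$ is $2n\times2n$ block diagonal. Then: (i) $S$ is either (a) of the form $\begin{pmatrix}A&0\\0&D\end{pmatrix}$ or $\begin{pmatrix}0&B\\C&0\end{pmatrix}$, or (b) of the form $\begin{pmatrix}A&B\\C&D\end{pmatrix}$, where the blocks $A,B,C,D\in\mathbb{R}^{2n\times2n}$ appearing are invertible; (ii) $S\begin{pmatrix}X&0\\0&X\end{pmatrix}S^{T}$ is $2n\times2n$ block diagonal for all $X\in\mathbb{R}^{2n\times2n}$. *)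

theory Defs
  imports "HOL-Analysis.Analysis"
begin

text \<open>A (2m)x(2m) real matrix is indexed by the sum type 'm + 'm: Inl i are the
  first block of indices, Inr i the second block.\<close>

definition blk11 :: "real^('m::finite + 'm)^('m + 'm) \<Rightarrow> real^'m^'m" where
  "blk11 S = (\<chi> i j. S $ Inl i $ Inl j)"
definition blk12 :: "real^('m::finite + 'm)^('m + 'm) \<Rightarrow> real^'m^'m" where
  "blk12 S = (\<chi> i j. S $ Inl i $ Inr j)"
definition blk21 :: "real^('m::finite + 'm)^('m + 'm) \<Rightarrow> real^'m^'m" where
  "blk21 S = (\<chi> i j. S $ Inr i $ Inl j)"
definition blk22 :: "real^('m::finite + 'm)^('m + 'm) \<Rightarrow> real^'m^'m" where
  "blk22 S = (\<chi> i j. S $ Inr i $ Inr j)"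

definition dup_diag :: "real^'m^'m \<Rightarrow> real^('m::finite + 'm)^('m + 'm)" where
  "dup_diag G = (\<chi> i j. case (i, j) of
       (Inl a, Inl b) \<Rightarrow> G $ a $ b
     | (Inr a, Inr b) \<Rightarrow> G $ a $ b
     | _ \<Rightarrow> 0)"

definition block_diagonal :: "real^('m::finite + 'm)^('m + 'm) \<Rightarrow> bool" where
  "block_diagonal M \<longleftrightarrow> blk12 M = 0 \<and> blk21 M = 0"

end

theory Submission
  imports Defs
begin

lemma sum_Plus_UNIV:
  "(\<Sum>p\<in>(UNIV::('a::finite+'b::finite) set). f p) = (\<Sum>i\<in>UNIV. f (Inl i)) + (\<Sum>j\<in>UNIV. f (Inr j))"
  by (subst UNIV_Plus_UNIV[symmetric], subst sum.Plus) (auto simp: o_def)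

definition sg :: "'a + 'a \<Rightarrow> real" where
  "sg p = (case p of Inl _ \<Rightarrow> 1 | Inr _ \<Rightarrow> -1)"

definition Jm :: "real^('m::finite + 'm)^('m + 'm)" where
  "Jm = (\<chi> i j. if i = j then sg i else 0)"

lemma Jm_left: "(Jm ** M) $ i $ j = sg i * M $ i $ j"
proof -
  have "(Jm ** M) $ i $ j = (\<Sum>k\<in>UNIV. (if i = k then sg i else 0) * M $ k $ j)"
    by (simp add: matrix_matrix_mult_def Jm_def)
  also have "\<dots> = (\<Sum>k\<in>UNIV. if k = i then sg i * M $ i $ j else 0)"
    by (intro sum.cong) auto
  finally show ?thesis by simp
qed

lemma Jm_right: "(M ** Jm) $ i $ j = M $ i $ j * sg j"
proof -
  have "(M ** Jm) $ i $ j = (\<Sum>k\<in>UNIV. M $ i $ k * (if k = j then sg k else 0))"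
    by (simp add: matrix_matrix_mult_def Jm_def)
  also have "\<dots> = (\<Sum>k\<in>UNIV. if k = j then M $ i $ j * sg j else 0)"
    by (intro sum.cong) auto
  finally show ?thesis by simp
qed

lemma bd_iff: "block_diagonal M \<longleftrightarrow> Jm ** M = M ** Jm"
proof
  assume "block_diagonal M"
  then have 1: "\<And>a b. M $ Inl a $ Inr b = 0" and 2: "\<And>a b. M $ Inr a $ Inl b = 0"
    unfolding block_diagonal_def blk12_def blk21_def
    by (metis vec_lambda_beta zero_index)+
  show "Jm ** M = M ** Jm"
    unfolding vec_eq_iff Jm_left Jm_right
  proof (intro allI)
    fix i j :: "'a + 'a"
    show "sg i * M $ i $ j = M $ i $ j * sg j"
      using 1 2 by (cases i; cases j) (auto simp: sg_def)
  qed
next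
  assume h: "Jm ** M = M ** Jm"
  have "\<And>i j. sg i * M $ i $ j = M $ i $ j * sg j"
    using h by (metis Jm_left Jm_right)
  then show "block_diagonal M"
  proof -
    have "M $ Inl a $ Inr b = 0" "M $ Inr a $ Inl b = 0" for a b
      using \<open>\<And>i j. sg i * M $ i $ j = M $ i $ j * sg j\<close>[of "Inl a" "Inr b"]
        \<open>\<And>i j. sg i * M $ i $ j = M $ i $ j * sg j\<close>[of "Inr a" "Inl b"]
      by (simp_all add: sg_def)
    then show ?thesis
      unfolding block_diagonal_def blk12_def blk21_def by (simp add: vec_eq_iff)
  qed
qed

lemma dup_diag_entry:
  "dup_diag G $ Inl a $ Inl b = G $ a $ b" "dup_diag G $ Inr a $ Inr b = G $ a $ b"
  "dup_diag G $ Inl a $ Inr b = 0" "dup_diag G $ Inr a $ Inl b = 0"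
  by (simp_all add: dup_diag_def)

lemma dup_diag_mult: "dup_diag (G ** H) = dup_diag G ** dup_diag H"
proof -
  have "dup_diag (G ** H) $ i $ j = (dup_diag G ** dup_diag H) $ i $ j" for i j
    by (cases i; cases j) (simp_all add: matrix_matrix_mult_def sum_Plus_UNIV dup_diag_entry)
  then show ?thesis by (simp add: vec_eq_iff)
qed

lemma dup_diag_add: "dup_diag (G + H) = dup_diag G + dup_diag H"
proof -
  have "dup_diag (G + H) $ i $ j = (dup_diag G + dup_diag H) $ i $ j" for i j
    by (cases i; cases j) (simp_all add: dup_diag_entry)
  then show ?thesis by (simp add: vec_eq_iff)
qed

lemma dup_diag_scale: "dup_diag (c *\<^sub>R G) = c *\<^sub>R dup_diag G"
proof -
  have "dup_diag (c *\<^sub>R G) $ i $ j = (c *\<^sub>R dup_diag G) $ i $ j" for i j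
    by (cases i; cases j) (simp_all add: dup_diag_entry)
  then show ?thesis by (simp add: vec_eq_iff)
qed

lemma dup_diag_one: "dup_diag (mat 1 :: real^'m::finite^'m) = mat 1"
proof -
  have "dup_diag (mat 1 :: real^'m^'m) $ i $ j = mat 1 $ i $ j" for i j
    by (cases i; cases j) (simp_all add: dup_diag_entry mat_def)
  then show ?thesis by (simp add: vec_eq_iff)
qed


lemma mm_add_r: "((A::real^'n::finite^'m::finite) + B) ** (C::real^'p::finite^'n) = A ** C + B ** C"
  by (vector matrix_matrix_mult_def sum.distrib[symmetric] field_simps)

lemma mm_scale_l: "(c *\<^sub>R (A::real^'n::finite^'m::finite)) ** (B::real^'p::finite^'n) = c *\<^sub>R (A ** B)"
  by (simp add: matrix_matrix_mult_def vec_eq_iff sum_distrib_left mult.assoc)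

lemma mm_scale_r: "(A::real^'n::finite^'m::finite) ** (c *\<^sub>R (B::real^'p::finite^'n)) = c *\<^sub>R (A ** B)"
  by (simp add: matrix_matrix_mult_def vec_eq_iff sum_distrib_left mult.left_commute)

definition Em :: "'m \<Rightarrow> 'm \<Rightarrow> real^'m::finite^'m" where
  "Em k l = axis k (axis l 1)"

lemma Em_entry: "Em k l $ a $ b = (if a = k \<and> b = l then 1 else 0)"
  by (simp add: Em_def axis_def)

lemma SD_entry:
  fixes S :: "real^('m::finite + 'm)^('m + 'm)"
  shows "(S ** dup_diag (Em k l)) $ p $ Inl b = (if b = l then S $ p $ Inl k else 0)"
    "(S ** dup_diag (Em k l)) $ p $ Inr b = (if b = l then S $ p $ Inr k else 0)"
proof -
  have "(S ** dup_diag (Em k l)) $ p $ Inl b = (\<Sum>a\<in>UNIV. S $ p $ Inl a * Em k l $ a $ b)"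
    by (simp add: matrix_matrix_mult_def sum_Plus_UNIV dup_diag_entry)
  also have "\<dots> = (\<Sum>a\<in>UNIV. if a = k then (if b = l then S $ p $ Inl k else 0) else 0)"
    by (intro sum.cong) (auto simp: Em_entry)
  finally show "(S ** dup_diag (Em k l)) $ p $ Inl b = (if b = l then S $ p $ Inl k else 0)" by simp
  have "(S ** dup_diag (Em k l)) $ p $ Inr b = (\<Sum>a\<in>UNIV. S $ p $ Inr a * Em k l $ a $ b)"
    by (simp add: matrix_matrix_mult_def sum_Plus_UNIV dup_diag_entry)
  also have "\<dots> = (\<Sum>a\<in>UNIV. if a = k then (if b = l then S $ p $ Inr k else 0) else 0)"
    by (intro sum.cong) (auto simp: Em_entry)
  finally show "(S ** dup_diag (Em k l)) $ p $ Inr b = (if b = l then S $ p $ Inr k else 0)" by simp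
qed

lemma SDS_entry:
  fixes S :: "real^('m::finite + 'm)^('m + 'm)"
  shows "(S ** dup_diag (Em k l) ** transpose S) $ p $ q
     = S $ p $ Inl k * S $ q $ Inl l + S $ p $ Inr k * S $ q $ Inr l"
proof -
  have "(S ** dup_diag (Em k l) ** transpose S) $ p $ q
     = (\<Sum>b\<in>UNIV. (S ** dup_diag (Em k l)) $ p $ Inl b * S $ q $ Inl b)
     + (\<Sum>b\<in>UNIV. (S ** dup_diag (Em k l)) $ p $ Inr b * S $ q $ Inr b)"
    unfolding matrix_matrix_mult_def[of _ "transpose S"] by (simp add: sum_Plus_UNIV transpose_def)
  also have "\<dots> = (\<Sum>b\<in>UNIV. if b = l then S $ p $ Inl k * S $ q $ Inl l else 0)
     + (\<Sum>b\<in>UNIV. if b = l then S $ p $ Inr k * S $ q $ Inr l else 0)"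
    unfolding SD_entry by (intro arg_cong2[where f="(+)"] sum.cong) auto
  finally show ?thesis by simp
qed

lemma inv_inj:
  fixes M :: "real^'n::finite^'n"
  assumes "invertible M" "M *v x = 0" shows "x = 0"
proof -
  obtain B where "B ** M = mat 1" using assms(1) unfolding invertible_def by blast
  then have "x = B *v (M *v x)" by (simp add: matrix_vector_mul_assoc)
  then show ?thesis using assms(2) by simp
qed

lemma inv_from:
  fixes M :: "real^'n::finite^'n"
  assumes "\<And>y. (\<forall>k. (\<Sum>i\<in>UNIV. M $ i $ k * y $ i) = 0) \<Longrightarrow> y = 0"
  shows "invertible M"
proof -
  have "\<forall>y. transpose M *v y = 0 \<longrightarrow> y = 0"
  proof (intro allI impI)
    fix y assume "transpose M *v y = 0"
    then have "\<forall>k. (\<Sum>i\<in>UNIV. M $ i $ k * y $ i) = 0"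
      by (auto simp: vec_eq_iff matrix_vector_mult_def transpose_def)
    then show "y = 0" by (rule assms)
  qed
  then have "\<exists>B. B ** transpose M = mat 1" using matrix_left_invertible_ker by blast
  then have "\<exists>B. M ** B = mat 1" using left_invertible_transpose by blast
  then show ?thesis using invertible_right_inverse by blast
qed

lemma top_inj:
  fixes S :: "real^('m::finite + 'm)^('m + 'm)"
  assumes "invertible S"
    and "\<forall>k. (\<Sum>i\<in>UNIV. S $ Inl i $ Inl k * y $ i) = 0"
    and "\<forall>k. (\<Sum>i\<in>UNIV. S $ Inl i $ Inr k * y $ i) = 0"
  shows "y = 0"
proof -
  define z :: "real^('m + 'm)" where "z = (\<chi> p. case p of Inl i \<Rightarrow> y $ i | Inr _ \<Rightarrow> 0)"
  have "transpose S *v z = 0"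
  proof -
    have "(transpose S *v z) $ q = 0" for q
      using assms(2,3) by (cases q) (simp_all add: matrix_vector_mult_def transpose_def z_def sum_Plus_UNIV)
    then show ?thesis by (simp add: vec_eq_iff)
  qed
  then have "z = 0" using inv_inj transpose_invertible assms(1) by blast
  then have "z $ Inl i = 0" for i by simp
  then show ?thesis by (simp add: z_def vec_eq_iff)
qed

lemma bot_inj:
  fixes S :: "real^('m::finite + 'm)^('m + 'm)"
  assumes "invertible S"
    and "\<forall>k. (\<Sum>i\<in>UNIV. S $ Inr i $ Inl k * y $ i) = 0"
    and "\<forall>k. (\<Sum>i\<in>UNIV. S $ Inr i $ Inr k * y $ i) = 0"
  shows "y = 0"
proof -
  define z :: "real^('m + 'm)" where "z = (\<chi> p. case p of Inr i \<Rightarrow> y $ i | Inl _ \<Rightarrow> 0)"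
  have "transpose S *v z = 0"
  proof -
    have "(transpose S *v z) $ q = 0" for q
      using assms(2,3) by (cases q) (simp_all add: matrix_vector_mult_def transpose_def z_def sum_Plus_UNIV)
    then show ?thesis by (simp add: vec_eq_iff)
  qed
  then have "z = 0" using inv_inj transpose_invertible assms(1) by blast
  then have "z $ Inr i = 0" for i by simp
  then show ?thesis by (simp add: z_def vec_eq_iff)
qed

lemma sum_scaled:
  assumes "\<And>i. f i = c * g i" "(\<Sum>i\<in>UNIV. g i * y $ i) = 0"
  shows "(\<Sum>i\<in>UNIV. f i * y $ i) = (0::real)"
proof -
  have "(\<Sum>i\<in>UNIV. f i * y $ i) = c * (\<Sum>i\<in>UNIV. g i * y $ i)"
    by (simp add: assms(1) sum_distrib_left mult.assoc)
  then show ?thesis using assms(2) by simp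
qed

theorem lemma5:
  fixes S :: "real^('m::finite + 'm)^('m + 'm)" and n :: nat
  assumes "n \<ge> 1" and "CARD('m) = 2 * n"
    and "invertible S"
    and "\<forall>G :: real^'m^'m. transpose G = G \<longrightarrow>
           block_diagonal (S ** dup_diag G ** transpose S)"
  shows "((blk12 S = 0 \<and> blk21 S = 0 \<and> invertible (blk11 S) \<and> invertible (blk22 S))
         \<or> (blk11 S = 0 \<and> blk22 S = 0 \<and> invertible (blk12 S) \<and> invertible (blk21 S))
         \<or> (invertible (blk11 S) \<and> invertible (blk12 S) \<and> invertible (blk21 S) \<and> invertible (blk22 S)))
       \<and> (\<forall>X :: real^'m^'m. block_diagonal (S ** dup_diag X ** transpose S))"
proof -
  obtain T where ST: "S ** T = mat 1" and TS: "T ** S = mat 1"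
    using assms(3) unfolding invertible_def by blast
  define P where "P = S ** transpose S"
  have PJ: "Jm ** P = P ** Jm"
    using assms(4)[rule_format, of "mat 1"] unfolding P_def bd_iff by (simp add: dup_diag_one)
  define Q where "Q = transpose T ** T"
  have PQ: "P ** Q = mat 1"
  proof -
    have "P ** Q = S ** (transpose (T ** S) ** T)"
      unfolding P_def Q_def matrix_transpose_mul by (simp add: matrix_mul_assoc)
    then show ?thesis by (simp add: TS ST)
  qed
  have QP: "Q ** P = mat 1"
  proof -
    have "Q ** P = transpose T ** (T ** S) ** transpose S"
      unfolding P_def Q_def by (simp add: matrix_mul_assoc)
    also have "\<dots> = transpose (S ** T)" by (simp add: TS matrix_transpose_mul)
    finally show ?thesis by (simp add: ST)
  qed
  have QJ: "Jm ** Q = Q ** Jm"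
  proof -
    have "Jm ** Q = Q ** P ** Jm ** Q" by (simp add: QP)
    also have "\<dots> = Q ** (Jm ** P) ** Q" by (simp add: PJ matrix_mul_assoc)
    also have "\<dots> = Q ** Jm ** (P ** Q)" by (simp add: matrix_mul_assoc)
    finally show ?thesis by (simp add: PQ)
  qed
  have tS: "transpose S = T ** P"
    unfolding P_def by (simp add: matrix_mul_assoc TS)
  define f where "f G = S ** dup_diag G ** T" for G :: "real^'m^'m"
  have fP: "S ** dup_diag G ** transpose S = f G ** P" for G
    unfolding f_def tS by (simp add: matrix_mul_assoc)
  have fwd: "Jm ** f G = f G ** Jm" if "block_diagonal (S ** dup_diag G ** transpose S)" for G
  proof -
    have h: "Jm ** (f G ** P) = f G ** P ** Jm" using that unfolding bd_iff fP .
    have "Jm ** f G = Jm ** (f G ** P) ** Q" by (simp add: PQ matrix_mul_assoc[symmetric])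
    also have "\<dots> = f G ** P ** (Jm ** Q)" by (subst h) (simp add: matrix_mul_assoc)
    also have "\<dots> = f G ** (P ** Q) ** Jm" by (simp add: QJ matrix_mul_assoc)
    finally show ?thesis by (simp add: PQ)
  qed
  have bwd: "block_diagonal (S ** dup_diag G ** transpose S)" if "Jm ** f G = f G ** Jm" for G
  proof -
    have "Jm ** (f G ** P) = f G ** Jm ** P" by (simp add: that matrix_mul_assoc)
    also have "\<dots> = f G ** P ** Jm" by (simp add: PJ matrix_mul_assoc[symmetric])
    finally show ?thesis unfolding bd_iff fP .
  qed
  define Alg where "Alg = {G. Jm ** f G = f G ** Jm}"
  have fmult: "f (G ** H) = f G ** f H" for G H
  proof -
    have "f G ** f H = S ** dup_diag G ** (T ** S) ** dup_diag H ** T"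
      unfolding f_def by (simp add: matrix_mul_assoc)
    then show ?thesis unfolding f_def by (simp add: TS dup_diag_mult matrix_mul_assoc)
  qed
  have fadd: "f (G + H) = f G + f H" for G H
    unfolding f_def dup_diag_add by (simp add: matrix_add_ldistrib mm_add_r)
  have fscale: "f (c *\<^sub>R G) = c *\<^sub>R f G" for c G
    unfolding f_def dup_diag_scale by (simp add: mm_scale_l mm_scale_r)
  have sub: "subspace Alg"
    unfolding subspace_def Alg_def
  proof (intro conjI ballI allI)
    have "f 0 = 0 *\<^sub>R f 0" using fscale[of 0 0] by simp
    then show "0 \<in> {G. Jm ** f G = f G ** Jm}" by simp
  next
    fix x y assume "x \<in> {G. Jm ** f G = f G ** Jm}" "y \<in> {G. Jm ** f G = f G ** Jm}"
    then show "x + y \<in> {G. Jm ** f G = f G ** Jm}"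
      by (simp add: fadd matrix_add_ldistrib mm_add_r)
  next
    fix c x assume "x \<in> {G. Jm ** f G = f G ** Jm}"
    then show "c *\<^sub>R x \<in> {G. Jm ** f G = f G ** Jm}"
      by (simp add: fscale mm_scale_l mm_scale_r)
  qed
  have symA: "G \<in> Alg" if "transpose G = G" for G
    unfolding Alg_def using fwd assms(4) that by blast
  have multA: "G ** H \<in> Alg" if "G \<in> Alg" "H \<in> Alg" for G H
  proof -
    have g: "Jm ** f G = f G ** Jm" and h: "Jm ** f H = f H ** Jm" using that unfolding Alg_def by auto
    have "Jm ** (f G ** f H) = (Jm ** f G) ** f H" by (simp add: matrix_mul_assoc)
    also have "\<dots> = f G ** (Jm ** f H)" unfolding g by (simp add: matrix_mul_assoc)
    also have "\<dots> = f G ** f H ** Jm" unfolding h by (simp add: matrix_mul_assoc)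
    finally have "Jm ** (f G ** f H) = f G ** f H ** Jm" .
    then show ?thesis unfolding Alg_def by (simp add: fmult)
  qed
  have EA: "Em k l \<in> Alg" for k l
  proof (cases "k = l")
    case True
    then show ?thesis by (intro symA) (simp add: vec_eq_iff transpose_def Em_entry)
  next
    case False
    have eq: "Em k l = Em k k ** (Em k l + Em l k)"
    proof -
      have e1: "(Em k k ** X) $ a $ b = (if a = k then X $ k $ b else 0)" for a b and X :: "real^'m^'m"
      proof -
        have "(Em k k ** X) $ a $ b = (\<Sum>c\<in>UNIV. (if a = k \<and> c = k then 1 else 0) * X $ c $ b)"
          by (simp add: matrix_matrix_mult_def Em_entry)
        also have "\<dots> = (\<Sum>c\<in>UNIV. if c = k then (if a = k then X $ k $ b else 0) else 0)"
          by (intro sum.cong) auto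
        finally show ?thesis by simp
      qed
      show ?thesis using False by (auto simp add: vec_eq_iff Em_entry e1)
    qed
    have m1: "Em k k \<in> Alg" by (intro symA) (simp add: vec_eq_iff transpose_def Em_entry)
    have m2: "Em k l + Em l k \<in> Alg"
    proof (rule symA)
      have "transpose (Em k l + Em l k) $ i $ j = (Em k l + Em l k) $ i $ j" for i j
        by (simp add: transpose_def Em_entry add.commute conj_commute)
      then show "transpose (Em k l + Em l k) = Em k l + Em l k" by (simp add: vec_eq_iff)
    qed
    have "Em k k ** (Em k l + Em l k) \<in> Alg" by (rule multA[OF m1 m2])
    then show ?thesis by (rule back_subst) (rule eq[symmetric])
  qed
  have "Basis \<subseteq> Alg"
  proof
    fix x :: "real^'m^'m" assume "x \<in> Basis"
    then obtain k u where "x = axis k u" "u \<in> (Basis :: (real^'m) set)" unfolding Basis_vec_def by blast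
    moreover then obtain l v where "u = axis l v" "v \<in> (Basis :: real set)" unfolding Basis_vec_def by blast
    ultimately have "x = Em k l" by (simp add: Em_def Basis_real_def)
    then show "x \<in> Alg" using EA by simp
  qed
  then have allA: "X \<in> Alg" for X
    using span_minimal[OF _ sub] span_Basis by blast
  have partii: "\<forall>X :: real^'m^'m. block_diagonal (S ** dup_diag X ** transpose S)"
    using allA bwd unfolding Alg_def by blast
  define a where "a i k = S $ Inl i $ Inl k" for i k
  define b where "b i k = S $ Inl i $ Inr k" for i k
  define c where "c i k = S $ Inr i $ Inl k" for i k
  define d where "d i k = S $ Inr i $ Inr k" for i k
  have R: "a i k * c j l + b i k * d j l = 0" for i j k l
  proof -
    have "blk12 (S ** dup_diag (Em k l) ** transpose S) = 0"
      using partii unfolding block_diagonal_def by blast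
    then have "blk12 (S ** dup_diag (Em k l) ** transpose S) $ i $ j = 0" by simp
    then have "(S ** dup_diag (Em k l) ** transpose S) $ Inl i $ Inr j = 0"
      unfolding blk12_def by simp
    then show ?thesis unfolding SDS_entry a_def b_def c_def d_def .
  qed
  have topI: "y = 0" if "\<forall>k. (\<Sum>i\<in>UNIV. a i k * y $ i) = 0" "\<forall>k. (\<Sum>i\<in>UNIV. b i k * y $ i) = 0" for y
    using top_inj[OF assms(3)] that unfolding a_def b_def by blast
  have botI: "y = 0" if "\<forall>k. (\<Sum>i\<in>UNIV. c i k * y $ i) = 0" "\<forall>k. (\<Sum>i\<in>UNIV. d i k * y $ i) = 0" for y
    using bot_inj[OF assms(3)] that unfolding c_def d_def by blast
  have AB: "\<exists>i k. a i k \<noteq> 0 \<or> b i k \<noteq> 0"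
  proof (rule ccontr)
    assume "\<not> ?thesis"
    then have z: "a i k = 0" "b i k = 0" for i k by auto
    have "axis undefined 1 = (0::real^'m)" by (rule topI) (simp_all add: z)
    then show False by (simp add: axis_eq_0_iff)
  qed
  have CD: "\<exists>i k. c i k \<noteq> 0 \<or> d i k \<noteq> 0"
  proof (rule ccontr)
    assume "\<not> ?thesis"
    then have z: "c i k = 0" "d i k = 0" for i k by auto
    have "axis undefined 1 = (0::real^'m)" by (rule botI) (simp_all add: z)
    then show False by (simp add: axis_eq_0_iff)
  qed
  have b11: "blk11 S $ i $ k = a i k" for i k by (simp add: blk11_def a_def)
  have b12: "blk12 S $ i $ k = b i k" for i k by (simp add: blk12_def b_def)
  have b21: "blk21 S $ i $ k = c i k" for i k by (simp add: blk21_def c_def)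
  have b22: "blk22 S $ i $ k = d i k" for i k by (simp add: blk22_def d_def)
  have parti: "((blk12 S = 0 \<and> blk21 S = 0 \<and> invertible (blk11 S) \<and> invertible (blk22 S))
         \<or> (blk11 S = 0 \<and> blk22 S = 0 \<and> invertible (blk12 S) \<and> invertible (blk21 S))
         \<or> (invertible (blk11 S) \<and> invertible (blk12 S) \<and> invertible (blk21 S) \<and> invertible (blk22 S)))"
  proof (cases "\<forall>j l. c j l = 0")
    case C0: True
    obtain j0 l0 where "d j0 l0 \<noteq> 0" using CD C0 by blast
    then have B0: "b i k = 0" for i k using R[of i k j0 l0] C0 by simp
    have "blk12 S = 0" "blk21 S = 0" using B0 C0 by (simp_all add: vec_eq_iff b12 b21)
    moreover have "invertible (blk11 S)"
      by (rule inv_from) (intro topI, simp add: b11, simp add: B0)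
    moreover have "invertible (blk22 S)"
      by (rule inv_from) (intro botI, simp add: C0, simp add: b22)
    ultimately show ?thesis by blast
  next
    case C1: False
    then obtain j0 l0 where c0: "c j0 l0 \<noteq> 0" by blast
    show ?thesis
    proof (cases "\<forall>i k. a i k = 0")
      case A0: True
      obtain i0 k0 where "b i0 k0 \<noteq> 0" using AB A0 by blast
      then have D0: "d j l = 0" for j l using R[of i0 k0 j l] A0 by simp
      have "blk11 S = 0" "blk22 S = 0" using A0 D0 by (simp_all add: vec_eq_iff b11 b22)
      moreover have "invertible (blk12 S)"
        by (rule inv_from) (intro topI, simp add: A0, simp add: b12)
      moreover have "invertible (blk21 S)"
        by (rule inv_from) (intro botI, simp add: b21, simp add: D0)
      ultimately show ?thesis by blast
    next
      case A1: False
      then obtain i0 k0 where a0: "a i0 k0 \<noteq> 0" by blast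
      have R0: "a i0 k0 * c j0 l0 + b i0 k0 * d j0 l0 = 0" by (rule R)
      have "a i0 k0 * c j0 l0 \<noteq> 0" using a0 c0 by simp
      then have b0: "b i0 k0 \<noteq> 0" and d0: "d j0 l0 \<noteq> 0" using R0 by auto
      have ab: "a i k = (- d j0 l0 / c j0 l0) * b i k" for i k
        using R[of i k j0 l0] c0 by (simp add: field_simps; linarith?)
      have ba: "b i k = (- c j0 l0 / d j0 l0) * a i k" for i k
        using R[of i k j0 l0] d0 by (simp add: field_simps; linarith?)
      have cd: "c j l = (- b i0 k0 / a i0 k0) * d j l" for j l
        using R[of i0 k0 j l] a0 by (simp add: field_simps; linarith?)
      have dc: "d j l = (- a i0 k0 / b i0 k0) * c j l" for j l
        using R[of i0 k0 j l] b0 by (simp add: field_simps; linarith?)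
      obtain k1 where ba': "\<And>i k. b i k = k1 * a i k" using ba by blast
      obtain k2 where ab': "\<And>i k. a i k = k2 * b i k" using ab by blast
      obtain k3 where dc': "\<And>i k. d i k = k3 * c i k" using dc by blast
      obtain k4 where cd': "\<And>i k. c i k = k4 * d i k" using cd by blast
      have "invertible (blk11 S)"
      proof (rule inv_from)
        fix y assume h: "\<forall>k. (\<Sum>i\<in>UNIV. blk11 S $ i $ k * y $ i) = 0"
        show "y = 0"
        proof (rule topI)
          show "\<forall>k. (\<Sum>i\<in>UNIV. a i k * y $ i) = 0" using h by (simp add: b11)
          then show "\<forall>k. (\<Sum>i\<in>UNIV. b i k * y $ i) = 0" by (simp add: ba' mult.assoc flip: sum_distrib_left)
        qed
      qed
      moreover have "invertible (blk12 S)"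
      proof (rule inv_from)
        fix y assume h: "\<forall>k. (\<Sum>i\<in>UNIV. blk12 S $ i $ k * y $ i) = 0"
        show "y = 0"
        proof (rule topI)
          show B: "\<forall>k. (\<Sum>i\<in>UNIV. b i k * y $ i) = 0" using h by (simp add: b12)
          then show "\<forall>k. (\<Sum>i\<in>UNIV. a i k * y $ i) = 0" by (simp add: ab' mult.assoc flip: sum_distrib_left)
        qed
      qed
      moreover have "invertible (blk21 S)"
      proof (rule inv_from)
        fix y assume h: "\<forall>k. (\<Sum>i\<in>UNIV. blk21 S $ i $ k * y $ i) = 0"
        show "y = 0"
        proof (rule botI)
          show "\<forall>k. (\<Sum>i\<in>UNIV. c i k * y $ i) = 0" using h by (simp add: b21)
          then show "\<forall>k. (\<Sum>i\<in>UNIV. d i k * y $ i) = 0" by (simp add: dc' mult.assoc flip: sum_distrib_left)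
        qed
      qed
      moreover have "invertible (blk22 S)"
      proof (rule inv_from)
        fix y assume h: "\<forall>k. (\<Sum>i\<in>UNIV. blk22 S $ i $ k * y $ i) = 0"
        show "y = 0"
        proof (rule botI)
          show B: "\<forall>k. (\<Sum>i\<in>UNIV. d i k * y $ i) = 0" using h by (simp add: b22)
          then show "\<forall>k. (\<Sum>i\<in>UNIV. c i k * y $ i) = 0" by (simp add: cd' mult.assoc flip: sum_distrib_left)
        qed
      qed
      ultimately show ?thesis by blast
    qed
  qed
  show ?thesis using parti partii by blast
qed

end
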